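(* Let $p\in\mathbb{N}$, $\xi_k=\frac{k}{p}\pi$ for $k=0,\dots,p$, and let $\beta=(\beta_0,\dots,\beta_p)\in\mathbb{R}^{p+1}$. Define $g(\xi)=\sum_{j=0}^p\beta_j\cos(j\xi)$ and $\mathbf{g}=(g(\xi_0),\dots,g(\xi_p))\in\mathbb{R}^{p+1}$. Then $\|\beta\|_2\le\frac{2}{\sqrt{p+1}}\|\mathbf{g}\|_2$. *)

theory Defs
  imports "HOL-Analysis.Analysis"
begin

end

theory Submission
  imports Defs
begin

lemma tele: "(\<Sum>k=0..n. 2 * sin (a/2) * cos (real k * a)) = sin ((real n + 1/2) * a) + sin (a/2)"
proof (induction n)
  case 0 then show ?case by simp
next
  case (Suc n)
  have e: "2 * sin (a/2) * cos ((real n + 1) * a) = sin ((real n + 1) * a + a/2) - sin ((real n + 1) * a - a/2)"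
    by (simp add: sin_add sin_diff)
  have "sin ((real n + 1) * a + a/2) = sin ((real (Suc n) + 1/2) * a)" by (simp add: algebra_simps)
  moreover have "sin ((real n + 1) * a - a/2) = sin ((real n + 1/2) * a)" by (simp add: algebra_simps)
  ultimately show ?case using Suc e by (simp add: algebra_simps)
qed

definition wt :: "nat \<Rightarrow> nat \<Rightarrow> real" where "wt p k = (if k = 0 \<or> k = p then 1/2 else 1)"

lemma wsum_tele:
  fixes a :: real
  assumes "p \<ge> 1"
  shows "2 * sin (a/2) * (\<Sum>k=0..p. wt p k * cos (real k * a)) = sin (real p * a) * cos (a/2)"
proof -
  have split: "(\<Sum>k=0..p. wt p k * cos (real k * a)) = (\<Sum>k=0..p. cos (real k * a)) - 1/2 - cos (real p * a)/2"
  proof -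
    have "(\<Sum>k=0..p. wt p k * cos (real k * a)) = (\<Sum>k=0..p. cos (real k * a) - (if k = 0 then 1/2 else 0) - (if k = p then cos (real p * a)/2 else 0))"
      using assms by (intro sum.cong) (auto simp: wt_def)
    also have "\<dots> = (\<Sum>k=0..p. cos (real k * a)) - 1/2 - cos (real p * a)/2"
      by (simp add: sum_subtractf)
    finally show ?thesis .
  qed
  have t: "2 * sin (a/2) * (\<Sum>k=0..p. cos (real k * a)) = sin ((real p + 1/2) * a) + sin (a/2)"
    using tele[of a p] by (simp add: sum_distrib_left mult.assoc)
  have "sin ((real p + 1/2) * a) = sin (real p * a + a/2)" by (simp add: algebra_simps)
  then show ?thesis unfolding split using t
    by (simp add: algebra_simps sin_add)
qed

lemma wsum_zero:
  assumes "p \<ge> 1" and nd: "\<not> (2 * int p) dvd m"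
  shows "(\<Sum>k=0..p. wt p k * cos (real k * (of_int m * pi / real p))) = 0"
proof -
  let ?a = "of_int m * pi / real p"
  have "sin (real p * ?a) = 0" using assms by (simp add: sin_times_pi_eq_0)
  moreover have "sin (?a/2) \<noteq> 0"
  proof
    assume "sin (?a/2) = 0"
    then obtain i where i: "?a/2 = of_int i * pi" by (auto simp: sin_zero_iff_int2)
    then have "(of_int m :: real) = of_int (2 * int p * i)" using assms(1) by (simp add: field_simps)
    then have "m = 2 * int p * i" by (simp only: of_int_eq_iff)
    with nd show False by simp
  qed
  ultimately show ?thesis using wsum_tele[OF assms(1), of ?a] by simp
qed

lemma wsum_one: assumes "p \<ge> 1" shows "(\<Sum>k=0..p. wt p k) = real p"
proof -
  have False: "p \<noteq> 0" using assms by simp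
  have "(\<Sum>k=0..p. wt p k) = (\<Sum>k=0..p. 1 - (if k = 0 then 1/2 else 0) - (if k = p then 1/2 else 0))"
    using False by (intro sum.cong) (auto simp: wt_def)
  also have "\<dots> = real p" by (simp add: sum_subtractf)
  finally show ?thesis .
qed

lemma orth:
  assumes p: "p \<ge> 1" and "j \<le> p" "l \<le> p" "j \<noteq> l"
  shows "(\<Sum>k=0..p. wt p k * (cos (real j * (real k / real p * pi)) * cos (real l * (real k / real p * pi)))) = 0"
proof -
  have e: "cos (real j * (real k / real p * pi)) * cos (real l * (real k / real p * pi))
      = (cos (real k * (of_int (int j - int l) * pi / real p)) + cos (real k * (of_int (int j + int l) * pi / real p))) / 2" for k
  proof -
    have a1: "real j * (real k / real p * pi) - real l * (real k / real p * pi) = real k * (of_int (int j - int l) * pi / real p)"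
      by (simp add: algebra_simps diff_divide_distrib)
    have a2: "real j * (real k / real p * pi) + real l * (real k / real p * pi) = real k * (of_int (int j + int l) * pi / real p)"
      by (simp add: algebra_simps add_divide_distrib)
    show ?thesis by (simp only: cos_times_cos a1 a2)
  qed
  have n1: "\<not> (2 * int p) dvd (int j - int l)"
  proof
    assume "(2 * int p) dvd (int j - int l)"
    then obtain c where c: "int j - int l = 2 * int p * c" by (auto simp: dvd_def)
    have "c \<noteq> 0" using c assms by auto
    then have "\<bar>2 * int p * c\<bar> \<ge> 2 * int p" using p by (simp add: abs_mult)
    with c assms show False by auto
  qed
  have n2: "\<not> (2 * int p) dvd (int j + int l)"
  proof
    assume "(2 * int p) dvd (int j + int l)"
    then obtain c where c: "int j + int l = 2 * int p * c" by (auto simp: dvd_def)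
    have "0 < int j + int l" "int j + int l < 2 * int p" using assms by auto
    then have h1: "0 < 2 * int p * c" and h2: "2 * int p * c < 2 * int p * 1" using c by auto
    have pp: "0 < 2 * int p" using p by simp
    from h1 pp have "0 < c" by (simp add: zero_less_mult_iff)
    moreover from h2 pp have "c < 1" using mult_less_cancel_left_pos by blast
    ultimately show False by simp
  qed
  show ?thesis
    unfolding e using wsum_zero[OF p n1] wsum_zero[OF p n2]
    by (simp add: sum_divide_distrib[symmetric] sum.distrib distrib_left)
qed

lemma diag:
  assumes p: "p \<ge> 1" and "j \<le> p"
  shows "(\<Sum>k=0..p. wt p k * (cos (real j * (real k / real p * pi)))\<^sup>2) \<ge> real p / 2"
proof (cases "j = 0 \<or> j = p")
  case True
  have "(cos (real j * (real k / real p * pi)))\<^sup>2 = 1" for k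
  proof (cases "j = 0")
    case False
    then have "j = p" using True by simp
    then have "real j * (real k / real p * pi) = real k * pi" using p by simp
    then show ?thesis by (simp add: cos_npi power_mult_distrib[symmetric] flip: power_mult)
  qed simp
  then show ?thesis using wsum_one[OF p] by simp
next
  case False
  have e: "(cos (real j * (real k / real p * pi)))\<^sup>2
      = (1 + cos (real k * (of_int (int j + int j) * pi / real p))) / 2" for k
    by (simp add: power2_eq_square cos_times_cos algebra_simps)
  have n2: "\<not> (2 * int p) dvd (int j + int j)"
  proof
    assume "(2 * int p) dvd (int j + int j)"
    then obtain c where c: "int j + int j = 2 * int p * c" by (auto simp: dvd_def)
    have "0 < int j + int j" "int j + int j < 2 * int p" using assms False by auto
    then have h1: "0 < 2 * int p * c" and h2: "2 * int p * c < 2 * int p * 1" using c by auto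
    have pp: "0 < 2 * int p" using p by simp
    from h1 pp have "0 < c" by (simp add: zero_less_mult_iff)
    moreover from h2 pp have "c < 1" using mult_less_cancel_left_pos by blast
    ultimately show False by simp
  qed
  have "(\<Sum>k=0..p. wt p k * (cos (real j * (real k / real p * pi)))\<^sup>2) = real p / 2"
    unfolding e using wsum_zero[OF p n2] wsum_one[OF p]
    by (simp add: sum_divide_distrib[symmetric] sum.distrib distrib_left)
  then show ?thesis by simp
qed

theorem mainTheorem16:
  fixes p :: nat and \<beta> :: "nat \<Rightarrow> real"
  defines "\<xi> \<equiv> (\<lambda>k::nat. real k / real p * pi)"
  defines "g \<equiv> (\<lambda>x::real. \<Sum>j=0..p. \<beta> j * cos (real j * x))"
  shows "sqrt (\<Sum>j=0..p. (\<beta> j)\<^sup>2) \<le> 2 / sqrt (real p + 1) * sqrt (\<Sum>k=0..p. (g (\<xi> k))\<^sup>2)"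
proof (cases "p = 0")
  case True
  then show ?thesis by (simp add: g_def \<xi>_def)
next
  case False
  then have p: "p \<ge> 1" by simp
  define c where "c j k = cos (real j * (real k / real p * pi))" for j k
  define B where "B = (\<Sum>j=0..p. (\<beta> j)\<^sup>2)"
  define G where "G = (\<Sum>k=0..p. (g (\<xi> k))\<^sup>2)"
  have gk: "g (\<xi> k) = (\<Sum>j=0..p. \<beta> j * c j k)" for k
    by (simp add: g_def \<xi>_def c_def)
  have wG: "(\<Sum>k=0..p. wt p k * (g (\<xi> k))\<^sup>2) = (\<Sum>j=0..p. (\<beta> j)\<^sup>2 * (\<Sum>k=0..p. wt p k * (c j k)\<^sup>2))"
  proof -
    have "(\<Sum>k=0..p. wt p k * (g (\<xi> k))\<^sup>2)
        = (\<Sum>k=0..p. \<Sum>j=0..p. \<Sum>l=0..p. \<beta> j * \<beta> l * (wt p k * (c j k * c l k)))"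
    proof (intro sum.cong refl)
      fix k
      have "wt p k * (g (\<xi> k))\<^sup>2 = wt p k * (\<Sum>j=0..p. \<Sum>l=0..p. \<beta> j * c j k * (\<beta> l * c l k))"
        by (simp only: gk power2_eq_square sum_product)
      also have "\<dots> = (\<Sum>j=0..p. \<Sum>l=0..p. wt p k * (\<beta> j * c j k * (\<beta> l * c l k)))"
        by (simp only: sum_distrib_left)
      also have "\<dots> = (\<Sum>j=0..p. \<Sum>l=0..p. \<beta> j * \<beta> l * (wt p k * (c j k * c l k)))"
        by (simp only: ac_simps)
      finally show "wt p k * (g (\<xi> k))\<^sup>2 = (\<Sum>j=0..p. \<Sum>l=0..p. \<beta> j * \<beta> l * (wt p k * (c j k * c l k)))" .
    qed
    also have "\<dots> = (\<Sum>j=0..p. \<Sum>l=0..p. \<beta> j * \<beta> l * (\<Sum>k=0..p. wt p k * (c j k * c l k)))"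
    proof -
      have "(\<Sum>k=0..p. \<Sum>j=0..p. \<Sum>l=0..p. \<beta> j * \<beta> l * (wt p k * (c j k * c l k)))
          = (\<Sum>j=0..p. \<Sum>k=0..p. \<Sum>l=0..p. \<beta> j * \<beta> l * (wt p k * (c j k * c l k)))"
        by (rule sum.swap)
      also have "\<dots> = (\<Sum>j=0..p. \<Sum>l=0..p. \<Sum>k=0..p. \<beta> j * \<beta> l * (wt p k * (c j k * c l k)))"
        by (rule sum.cong[OF refl], rule sum.swap)
      also have "\<dots> = (\<Sum>j=0..p. \<Sum>l=0..p. \<beta> j * \<beta> l * (\<Sum>k=0..p. wt p k * (c j k * c l k)))"
        by (simp only: sum_distrib_left)
      finally show ?thesis .
    qed
    also have "\<dots> = (\<Sum>j=0..p. \<beta> j * \<beta> j * (\<Sum>k=0..p. wt p k * (c j k * c j k)))"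
    proof (intro sum.cong refl)
      fix j assume j: "j \<in> {0..p}"
      show "(\<Sum>l=0..p. \<beta> j * \<beta> l * (\<Sum>k=0..p. wt p k * (c j k * c l k))) = \<beta> j * \<beta> j * (\<Sum>k=0..p. wt p k * (c j k * c j k))"
      proof -
        have "(\<Sum>l=0..p. \<beta> j * \<beta> l * (\<Sum>k=0..p. wt p k * (c j k * c l k)))
          = \<beta> j * \<beta> j * (\<Sum>k = 0..p. wt p k * (c j k * c j k)) +
          (\<Sum>l\<in>{0..p} - {j}. \<beta> j * \<beta> l * (\<Sum>k = 0..p. wt p k * (c j k * c l k)))"
          using j by (intro sum.remove) auto
        moreover have "(\<Sum>l\<in>{0..p} - {j}. \<beta> j * \<beta> l * (\<Sum>k = 0..p. wt p k * (c j k * c l k))) = 0"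
          using j orth[OF p] by (intro sum.neutral) (auto simp: c_def)
        ultimately show ?thesis by simp
      qed
    qed
    finally show ?thesis by (simp add: power2_eq_square)
  qed
  have "(\<Sum>j=0..p. (\<beta> j)\<^sup>2 * (real p / 2)) \<le> (\<Sum>j=0..p. (\<beta> j)\<^sup>2 * (\<Sum>k=0..p. wt p k * (c j k)\<^sup>2))"
    using diag[OF p] by (intro sum_mono mult_left_mono) (auto simp: c_def)
  then have B1: "B * (real p / 2) \<le> (\<Sum>k=0..p. wt p k * (g (\<xi> k))\<^sup>2)"
    unfolding wG B_def sum_distrib_right .
  have "(\<Sum>k=0..p. wt p k * (g (\<xi> k))\<^sup>2) \<le> G"
    unfolding G_def by (intro sum_mono) (auto simp: wt_def)
  with B1 have B2: "B * real p \<le> 2 * G" by simp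
  have B0: "B \<ge> 0" unfolding B_def by (simp add: sum_nonneg)
  have "B * 1 \<le> B * real p" using B0 p by (intro mult_left_mono) auto
  then have "B * (real p + 1) \<le> 2 * B * real p" by (simp add: algebra_simps)
  also have "\<dots> \<le> 4 * G" using B2 by simp
  finally have "B \<le> 4 / (real p + 1) * G" by (simp add: field_simps)
  then have "sqrt B \<le> sqrt (4 / (real p + 1) * G)" by (rule real_sqrt_le_mono)
  also have "\<dots> = 2 / sqrt (real p + 1) * sqrt G"
    by (simp add: real_sqrt_mult real_sqrt_divide)
  finally show ?thesis unfolding B_def G_def .
qed

end
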